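(* Let $m$ and $n$ be positive integers. Then $$\binom{m+n-2}{m-1}\binom{n}{m}\binom{2n}{n}\equiv 0\pmod{m+n}.$$
   Context: Binomial coefficients $\binom{a}{b}$ are zero when $b<0$ or $b>a$ (for nonnegative integer $a$). *)

theory Defs
  imports Main
begin

end

theory Submission
  imports Defs
begin

lemma key:
  fixes a b :: nat
  assumes "a \<le> b"
  shows "(a+b+1) * ((a+b) choose a) * (Suc b choose Suc a) * ((2 * Suc b) choose Suc b)
       = (a+b+2) * (((a+b+1) choose a) * ((a+b+1) choose (a+1)) * ((2*Suc b) choose (b - a)))"
proof -
  have i1: "(a+b+2)*(a+b+1)*((a+b) choose a) = (a+1)*(b+1)*((a+b+2) choose (a+1))"
  proof -
    have e1: "(a+1) * ((a+b+2) choose (a+1)) = (a+b+2) * ((a+b+1) choose a)"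
      using Suc_times_binomial[of a "a+b+1"] by (simp del: binomial_Suc_Suc mult_Suc mult_Suc_right)
    have e2: "(b+1) * ((a+b+1) choose a) = (a+b+1) * ((a+b) choose a)"
    proof -
      have "(a+b+1) choose a = (a+b+1) choose (b+1)"
        using binomial_symmetric[of a "a+b+1"] by simp
      moreover have "(a+b) choose a = (a+b) choose b"
        using binomial_symmetric[of a "a+b"] by simp
      moreover have "(b+1) * ((a+b+1) choose (b+1)) = (a+b+1) * ((a+b) choose b)"
        using Suc_times_binomial[of b "a+b"] by (simp add: ac_simps del: binomial_Suc_Suc mult_Suc mult_Suc_right)
      ultimately show ?thesis by simp
    qed
    have "(a+1)*(b+1)*((a+b+2) choose (a+1)) = (b+1)*((a+1) * ((a+b+2) choose (a+1)))" by (simp only: ac_simps)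
    also have "\<dots> = (a+b+2) * ((b+1) * ((a+b+1) choose a))" unfolding e1 by (simp only: mult.left_commute)
    also have "\<dots> = (a+b+2)*(a+b+1)*((a+b) choose a)" unfolding e2 by (simp only: mult.assoc)
    finally show ?thesis by simp
  qed
  have i2: "(Suc b choose Suc a) * ((2 * Suc b) choose Suc b) = ((2*Suc b) choose (b - a)) * ((a+b+2) choose (a+1))"
  proof -
    have "((2 * Suc b) choose Suc b) * (Suc b choose (b - a)) = ((2 * Suc b) choose (b-a)) * ((2*Suc b - (b-a)) choose (Suc b - (b-a)))"
      by (rule choose_mult) (use assms in auto)
    moreover have "2*Suc b - (b-a) = a+b+2" "Suc b - (b-a) = a+1" using assms by auto
    moreover have "Suc b choose (b - a) = Suc b choose Suc a"
      using binomial_symmetric[of "Suc a" "Suc b"] assms by (simp add: Suc_diff_le)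
    ultimately show ?thesis by (simp only: mult.commute)
  qed
  have i3: "(b+1) * ((a+b+2) choose (a+1)) = (a+b+2) * ((a+b+1) choose (a+1))"
  proof -
    have "(a+b+2) choose (a+1) = (a+b+2) choose (b+1)"
      using binomial_symmetric[of "a+1" "a+b+2"] by simp
    moreover have "(a+b+1) choose (a+1) = (a+b+1) choose b"
      using binomial_symmetric[of "a+1" "a+b+1"] by simp
    moreover have "(b+1) * ((a+b+2) choose (b+1)) = (a+b+2) * ((a+b+1) choose b)"
      using Suc_times_binomial[of b "a+b+1"] by (simp add: ac_simps del: binomial_Suc_Suc mult_Suc mult_Suc_right)
    ultimately show ?thesis by (simp del: binomial_Suc_Suc mult_Suc mult_Suc_right)
  qed
  have i4: "(a+1) * ((a+b+2) choose (a+1)) = (a+b+2) * ((a+b+1) choose a)"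
    using Suc_times_binomial[of a "a+b+1"] by (simp del: binomial_Suc_Suc mult_Suc mult_Suc_right)
  have "(a+b+2) * ((a+b+1) * ((a+b) choose a) * (Suc b choose Suc a) * ((2 * Suc b) choose Suc b))
      = ((a+b+2)*(a+b+1)*((a+b) choose a)) * ((Suc b choose Suc a) * ((2 * Suc b) choose Suc b))"
    by (simp only: ac_simps)
  also have "\<dots> = (a+1)*(b+1)*((a+b+2) choose (a+1)) * (((2*Suc b) choose (b - a)) * ((a+b+2) choose (a+1)))"
    unfolding i1 i2 by (rule refl)
  also have "\<dots> = ((a+1)*((a+b+2) choose (a+1))) * ((b+1)*((a+b+2) choose (a+1))) * ((2*Suc b) choose (b - a))"
    by (simp only: ac_simps)
  also have "\<dots> = ((a+b+2) * ((a+b+1) choose a)) * ((a+b+2) * ((a+b+1) choose (a+1))) * ((2*Suc b) choose (b - a))"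
    unfolding i3 i4 by (rule refl)
  also have "\<dots> = (a+b+2) * ((a+b+2) * (((a+b+1) choose a) * ((a+b+1) choose (a+1)) * ((2*Suc b) choose (b - a))))"
    by (simp only: ac_simps)
  finally have "(a+b+2) * ((a+b+1) * ((a+b) choose a) * (Suc b choose Suc a) * ((2 * Suc b) choose Suc b))
     = (a+b+2) * ((a+b+2) * (((a+b+1) choose a) * ((a+b+1) choose (a+1)) * ((2*Suc b) choose (b - a))))" .
  then show ?thesis by (subst (asm) mult_left_cancel) auto
qed

theorem theorem2:
  fixes m n :: nat
  assumes "m \<ge> 1" and "n \<ge> 1"
  shows "(m + n) dvd ((m + n - 2) choose (m - 1)) * (n choose m) * ((2 * n) choose n)"
proof (cases "m \<le> n")
  case False
  then show ?thesis by (simp add: binomial_eq_0)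
next
  case True
  obtain a b where ab: "m = Suc a" "n = Suc b" using assms by (metis Suc_le_D One_nat_def)
  with True have le: "a \<le> b" by simp
  have ms: "m + n - 2 = a + b" "m - 1 = a" "m + n = a+b+2" using ab by auto
  let ?P = "((a+b) choose a) * (Suc b choose Suc a) * ((2 * Suc b) choose Suc b)"
  have "(a+b+2) dvd ((a+b+1) * ?P)"
    using key[OF le] by (metis dvd_triv_left mult.assoc)
  moreover have "coprime (a+b+2) (a+b+1)"
    using coprime_Suc_left_nat[of "a+b+1"] by simp
  ultimately have "(a+b+2) dvd ?P"
    using coprime_dvd_mult_right_iff by blast
  then show ?thesis using ms ab by simp
qed

end
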